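(* Let $G\colon Y\to X$ be a functor such that every object of $X$ has an absolute value. Let $x_0$ be a locally initial object of $X$ and let $y_0$ be an initial object of the full subcategory $Y_G(x_0)$. Then $x_0\cong |Gy_0|$ if and only if $x_0\cong|Gy|$ for some object $y$ of $Y$.
   Context: An object $x_0$ of a category $X$ is locally initial if for every object $x$ of $X$ there exists at most one morphism $x_0\to x$. For a locally initial object $x_0$ and a functor $G\colon Y\to X$, $Y_G(x_0)$ denotes the full subcategory of $Y$ of all objects $y$ such that there exists a morphism $x_0\to Gy$. For an object $x$ of $X$, an absolute value of $x$ is a locally initial object $|x|$ of $X$ admitting a morphism $|x|\to x$ such that for every locally initial object $x_1$ admitting a morphism $x_1\to x$ there exists a morphism $x_1\to|x|$; it is unique up to isomorphism. *)

theory Defs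
  imports Main
begin

text \<open>A (small-or-large) category given by a set of objects, hom-sets,
composition (comp g f = g after f) and identities.\<close>

record ('o, 'm) cat =
  Obj :: "'o set"
  Hom :: "'o \<Rightarrow> 'o \<Rightarrow> 'm set"
  comp :: "'m \<Rightarrow> 'm \<Rightarrow> 'm"
  cid :: "'o \<Rightarrow> 'm"

definition category :: "('o, 'm) cat \<Rightarrow> bool" where
  "category C \<longleftrightarrow>
     (\<forall>x\<in>Obj C. cid C x \<in> Hom C x x) \<and>
     (\<forall>x\<in>Obj C. \<forall>y\<in>Obj C. \<forall>z\<in>Obj C. \<forall>f\<in>Hom C x y. \<forall>g\<in>Hom C y z.
        comp C g f \<in> Hom C x z) \<and>
     (\<forall>w\<in>Obj C. \<forall>x\<in>Obj C. \<forall>y\<in>Obj C. \<forall>z\<in>Obj C.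
        \<forall>f\<in>Hom C w x. \<forall>g\<in>Hom C x y. \<forall>h\<in>Hom C y z.
        comp C h (comp C g f) = comp C (comp C h g) f) \<and>
     (\<forall>x\<in>Obj C. \<forall>y\<in>Obj C. \<forall>f\<in>Hom C x y.
        comp C f (cid C x) = f \<and> comp C (cid C y) f = f)"

record ('o, 'm, 'p, 'n) cfunctor =
  fobj :: "'o \<Rightarrow> 'p"
  fmor :: "'m \<Rightarrow> 'n"

definition is_functor ::
  "('o, 'm) cat \<Rightarrow> ('p, 'n) cat \<Rightarrow> ('o, 'm, 'p, 'n) cfunctor \<Rightarrow> bool" where
  "is_functor Y X G \<longleftrightarrow>
     (\<forall>y\<in>Obj Y. fobj G y \<in> Obj X) \<and>
     (\<forall>y\<in>Obj Y. \<forall>y'\<in>Obj Y. \<forall>f\<in>Hom Y y y'.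
        fmor G f \<in> Hom X (fobj G y) (fobj G y')) \<and>
     (\<forall>y\<in>Obj Y. fmor G (cid Y y) = cid X (fobj G y)) \<and>
     (\<forall>x\<in>Obj Y. \<forall>y\<in>Obj Y. \<forall>z\<in>Obj Y. \<forall>f\<in>Hom Y x y. \<forall>g\<in>Hom Y y z.
        fmor G (comp Y g f) = comp X (fmor G g) (fmor G f))"

definition iso_obj :: "('o, 'm) cat \<Rightarrow> 'o \<Rightarrow> 'o \<Rightarrow> bool" where
  "iso_obj C x y \<longleftrightarrow> x \<in> Obj C \<and> y \<in> Obj C \<and>
     (\<exists>f\<in>Hom C x y. \<exists>g\<in>Hom C y x. comp C g f = cid C x \<and> comp C f g = cid C y)"

definition locally_initial :: "('o, 'm) cat \<Rightarrow> 'o \<Rightarrow> bool" where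
  "locally_initial C x0 \<longleftrightarrow> x0 \<in> Obj C \<and>
     (\<forall>x\<in>Obj C. \<forall>f\<in>Hom C x0 x. \<forall>g\<in>Hom C x0 x. f = g)"

definition is_absval :: "('o, 'm) cat \<Rightarrow> 'o \<Rightarrow> 'o \<Rightarrow> bool" where
  "is_absval C x a \<longleftrightarrow> locally_initial C a \<and> Hom C a x \<noteq> {} \<and>
     (\<forall>x1. locally_initial C x1 \<and> Hom C x1 x \<noteq> {} \<longrightarrow> Hom C x1 a \<noteq> {})"

text \<open>|x|: a chosen absolute value (unique up to isomorphism when it exists).\<close>
definition absval :: "('o, 'm) cat \<Rightarrow> 'o \<Rightarrow> 'o" where
  "absval C x = (SOME a. is_absval C x a)"

definition YG_obj ::
  "('o, 'm) cat \<Rightarrow> ('p, 'n) cat \<Rightarrow> ('o, 'm, 'p, 'n) cfunctor \<Rightarrow> 'p \<Rightarrow> 'o set" where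
  "YG_obj Y X G x0 = {y \<in> Obj Y. Hom X x0 (fobj G y) \<noteq> {}}"

text \<open>Initial object of the full subcategory of Y on the object set S
  (hom-sets are those of Y, since the subcategory is full).\<close>
definition initial_in_full :: "('o, 'm) cat \<Rightarrow> 'o set \<Rightarrow> 'o \<Rightarrow> bool" where
  "initial_in_full Y S y0 \<longleftrightarrow> y0 \<in> S \<and> (\<forall>y\<in>S. \<exists>!f. f \<in> Hom Y y0 y)"

end

theory Submission
  imports Defs
begin

lemma absval_is:
  assumes "\<forall>x\<in>Obj X. \<exists>a. is_absval X x a" and "x \<in> Obj X"
  shows "is_absval X x (absval X x)"
  using assms unfolding absval_def by (metis someI_ex)

lemma cat_comp:
  assumes "category C" "x \<in> Obj C" "y \<in> Obj C" "z \<in> Obj C" "f \<in> Hom C x y" "g \<in> Hom C y z"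
  shows "comp C g f \<in> Hom C x z"
  using assms unfolding category_def by blast

lemma cat_id:
  assumes "category C" "x \<in> Obj C"
  shows "cid C x \<in> Hom C x x"
  using assms unfolding category_def by blast

lemma fun_obj:
  assumes "is_functor Y X G" "y \<in> Obj Y"
  shows "fobj G y \<in> Obj X"
  using assms unfolding is_functor_def by blast

lemma fun_mor:
  assumes "is_functor Y X G" "y \<in> Obj Y" "y' \<in> Obj Y" "f \<in> Hom Y y y'"
  shows "fmor G f \<in> Hom X (fobj G y) (fobj G y')"
  using assms unfolding is_functor_def by blast

theorem proposition2p13:
  fixes Y :: "('o, 'm) cat" and X :: "('p, 'n) cat"
    and G :: "('o, 'm, 'p, 'n) cfunctor"
  assumes "category Y" and "category X" and "is_functor Y X G"
    and "\<forall>x\<in>Obj X. \<exists>a. is_absval X x a"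
    and "locally_initial X x0"
    and "initial_in_full Y (YG_obj Y X G x0) y0"
  shows "iso_obj X x0 (absval X (fobj G y0)) \<longleftrightarrow>
         (\<exists>y\<in>Obj Y. iso_obj X x0 (absval X (fobj G y)))"
proof
  assume "iso_obj X x0 (absval X (fobj G y0))"
  moreover have "y0 \<in> Obj Y" using assms(6) unfolding initial_in_full_def YG_obj_def by auto
  ultimately show "\<exists>y\<in>Obj Y. iso_obj X x0 (absval X (fobj G y))" by blast
next
  assume "\<exists>y\<in>Obj Y. iso_obj X x0 (absval X (fobj G y))"
  then obtain y where y: "y \<in> Obj Y" and iso: "iso_obj X x0 (absval X (fobj G y))" by blast
  have catX: "category X" by fact
  define a where "a = absval X (fobj G y)"
  define b where "b = absval X (fobj G y0)"
  have y0: "y0 \<in> Obj Y" "Hom X x0 (fobj G y0) \<noteq> {}"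
    using assms(6) unfolding initial_in_full_def YG_obj_def by auto
  have Gy: "fobj G y \<in> Obj X" by (rule fun_obj[OF assms(3) y])
  have Gy0: "fobj G y0 \<in> Obj X" by (rule fun_obj[OF assms(3) y0(1)])
  have x0: "x0 \<in> Obj X" using assms(5) unfolding locally_initial_def by blast
  have aa: "is_absval X (fobj G y) a" unfolding a_def by (rule absval_is[OF assms(4) Gy])
  have ab: "is_absval X (fobj G y0) b" unfolding b_def by (rule absval_is[OF assms(4) Gy0])
  have aO: "a \<in> Obj X" and bO: "b \<in> Obj X"
    using aa ab unfolding is_absval_def locally_initial_def by auto
  obtain f g where f: "f \<in> Hom X x0 a" and g: "g \<in> Hom X a x0"
    using iso unfolding iso_obj_def a_def by blast
  obtain h where h: "h \<in> Hom X a (fobj G y)" using aa unfolding is_absval_def by blast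
  have "comp X h f \<in> Hom X x0 (fobj G y)" by (rule cat_comp[OF catX x0 aO Gy f h])
  hence yY: "y \<in> YG_obj Y X G x0" using y unfolding YG_obj_def by blast
  then obtain u where u: "u \<in> Hom Y y0 y" using assms(6) unfolding initial_in_full_def by blast
  have Gu: "fmor G u \<in> Hom X (fobj G y0) (fobj G y)" by (rule fun_mor[OF assms(3) y0(1) y u])
  obtain k where k: "k \<in> Hom X b (fobj G y0)" using ab unfolding is_absval_def by blast
  have "comp X (fmor G u) k \<in> Hom X b (fobj G y)" by (rule cat_comp[OF catX bO Gy0 Gy k Gu])
  hence "Hom X b a \<noteq> {}" using aa ab unfolding is_absval_def by blast
  then obtain p where p: "p \<in> Hom X b a" by blast
  have "Hom X x0 b \<noteq> {}" using ab assms(5) y0 unfolding is_absval_def by blast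
  then obtain q where q: "q \<in> Hom X x0 b" by blast
  have gp: "comp X g p \<in> Hom X b x0" by (rule cat_comp[OF catX bO aO x0 p g])
  have c1: "comp X (comp X g p) q = cid X x0"
    using assms(5) cat_comp[OF catX x0 bO x0 q gp] cat_id[OF catX x0] x0 unfolding locally_initial_def by blast
  have "locally_initial X b" using ab unfolding is_absval_def by blast
  hence c2: "comp X q (comp X g p) = cid X b"
    using cat_comp[OF catX bO x0 bO gp q] cat_id[OF catX bO] bO unfolding locally_initial_def by blast
  show "iso_obj X x0 (absval X (fobj G y0))"
    unfolding iso_obj_def b_def[symmetric] using x0 bO q gp c1 c2 by blast
qed

end
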